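(* Let $S=\{s_1,\dots,s_{k_1}\}$ and $T=\{t_1,\dots,t_{k_2}\}$ be nonempty sets of positive integers and $d=\gcd\{s+t: s\in S,t\in T\}$. For every positive integer $k$ there is an integer $r$ such that for each $j\in[k]$ there are nonnegative integers $a_{i,j}$ ($1\le i\le k_1$) and $b_{i,j}$ ($1\le i\le k_2$) with $$r+jd=\sum_{i=1}^{k_1}a_{i,j}s_i-\sum_{i=1}^{k_2}b_{i,j}t_i,$$ and such that $f(j):=\sum_{i=1}^{k_1}a_{i,j}+\sum_{i=1}^{k_2}b_{i,j}$ is the same for all $j\in[k]$. *)

theory Defs
  imports Main
begin

end

theory Submission
  imports Defs
begin

lemma gcd_lincomb:
  fixes f :: "'a \<Rightarrow> int"
  assumes "finite P"
  shows "\<exists>l. Gcd (f ` P) = (\<Sum>p\<in>P. l p * f p)"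
  using assms
proof (induction P rule: finite_induct)
  case empty
  then show ?case by simp
next
  case (insert q P)
  then obtain l where l: "Gcd (f ` P) = (\<Sum>p\<in>P. l p * f p)" by blast
  show ?case
  proof (cases "f q \<in> f ` P")
    case True
    then have "f ` insert q P = f ` P" by auto
    then show ?thesis using insert l
      by (intro exI[of _ "l(q := 0)"]) (auto intro!: sum.cong)
  next
    case False
    obtain u v where uv: "u * f q + v * Gcd (f ` P) = gcd (f q) (Gcd (f ` P))"
      using bezout_int by blast
    have "Gcd (f ` insert q P) = u * f q + v * (\<Sum>p\<in>P. l p * f p)"
      using uv l by simp
    also have "\<dots> = (\<Sum>p\<in>insert q P. (\<lambda>x. if x = q then u else v * l x) p * f p)"
    proof -
      have "(\<Sum>p\<in>P. (\<lambda>x. if x = q then u else v * l x) p * f p) = (\<Sum>p\<in>P. v * (l p * f p))"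
        using insert.hyps by (intro sum.cong) auto
      then show ?thesis using insert.hyps by (simp add: sum_distrib_left)
    qed
    finally show ?thesis by (intro exI[of _ "\<lambda>x. if x = q then u else v * l x"])
  qed
qed

theorem theorem4p2:
  fixes S T :: "int set" and k :: nat and d :: int
  assumes "finite S" "S \<noteq> {}" "\<forall>s\<in>S. s > 0"
      and "finite T" "T \<noteq> {}" "\<forall>t\<in>T. t > 0"
      and "d = Gcd {s + t | s t. s \<in> S \<and> t \<in> T}"
      and "k > 0"
  shows "\<exists>r :: int. \<exists>(a :: nat \<Rightarrow> int \<Rightarrow> nat) (b :: nat \<Rightarrow> int \<Rightarrow> nat).
           (\<forall>j\<in>{1..k}. r + int j * d
              = (\<Sum>s\<in>S. int (a j s) * s) - (\<Sum>t\<in>T. int (b j t) * t))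
         \<and> (\<exists>c. \<forall>j\<in>{1..k}. (\<Sum>s\<in>S. a j s) + (\<Sum>t\<in>T. b j t) = c)"
proof -
  define P where "P = S \<times> T"
  have fP: "finite P" using assms P_def by simp
  have dset: "{s + t | s t. s \<in> S \<and> t \<in> T} = (\<lambda>p. fst p + snd p) ` P"
    unfolding P_def by force
  obtain l where l: "d = (\<Sum>p\<in>P. l p * (fst p + snd p))"
    using gcd_lincomb[OF fP, of "\<lambda>p. fst p + snd p"] assms(7) dset by auto
  define x where "x j p = nat (int j * l p + int k * \<bar>l p\<bar>)" for j p
  define y where "y j p = nat (int k * \<bar>l p\<bar> - int j * l p)" for j p
  define a where "a j s = (\<Sum>t\<in>T. x j (s, t))" for j s
  define b where "b j t = (\<Sum>s\<in>S. y j (s, t))" for j t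
  define r where "r = (\<Sum>p\<in>P. int k * \<bar>l p\<bar> * (fst p - snd p))"
  have xi: "int (x j p) = int j * l p + int k * \<bar>l p\<bar>"
    and yi: "int (y j p) = int k * \<bar>l p\<bar> - int j * l p" if "j \<le> k" for j p
  proof -
    have "\<bar>int j * l p\<bar> \<le> int k * \<bar>l p\<bar>"
      using that by (simp add: abs_mult mult_right_mono)
    then show "int (x j p) = int j * l p + int k * \<bar>l p\<bar>"
      "int (y j p) = int k * \<bar>l p\<bar> - int j * l p"
      unfolding x_def y_def by (auto simp: abs_le_iff)
  qed
  have sa: "(\<Sum>s\<in>S. int (a j s) * s) = (\<Sum>p\<in>P. int (x j p) * fst p)" for j
    unfolding a_def P_def
    by (simp add: sum.cartesian_product sum_distrib_right case_prod_beta)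
  have sb: "(\<Sum>t\<in>T. int (b j t) * t) = (\<Sum>p\<in>P. int (y j p) * snd p)" for j
    unfolding b_def P_def of_nat_sum sum_distrib_right
    apply (subst sum.swap)
    by (simp add: sum.cartesian_product case_prod_beta)
  have ca: "(\<Sum>s\<in>S. a j s) = (\<Sum>p\<in>P. x j p)" for j
    unfolding a_def P_def by (simp add: sum.cartesian_product)
  have cb: "(\<Sum>t\<in>T. b j t) = (\<Sum>p\<in>P. y j p)" for j
    unfolding b_def P_def
    apply (subst sum.swap)
    by (simp add: sum.cartesian_product case_prod_beta)
  have val: "r + int j * d = (\<Sum>s\<in>S. int (a j s) * s) - (\<Sum>t\<in>T. int (b j t) * t)"
    if "j \<in> {1..k}" for j
  proof -
    have jk: "j \<le> k" using that by simp
    have "(\<Sum>s\<in>S. int (a j s) * s) - (\<Sum>t\<in>T. int (b j t) * t)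
        = (\<Sum>p\<in>P. int (x j p) * fst p - int (y j p) * snd p)"
      by (simp add: sa sb sum_subtractf)
    also have "\<dots> = (\<Sum>p\<in>P. int j * (l p * (fst p + snd p)) + int k * \<bar>l p\<bar> * (fst p - snd p))"
      using jk by (intro sum.cong) (auto simp: xi yi algebra_simps)
    also have "\<dots> = r + int j * d"
      by (simp add: r_def l sum.distrib sum_distrib_left)
    finally show ?thesis by simp
  qed
  have cnt: "(\<Sum>s\<in>S. a j s) + (\<Sum>t\<in>T. b j t) = (\<Sum>p\<in>P. nat (2 * int k * \<bar>l p\<bar>))"
    if "j \<in> {1..k}" for j
  proof -
    have jk: "j \<le> k" using that by simp
    have "int ((\<Sum>s\<in>S. a j s) + (\<Sum>t\<in>T. b j t)) = (\<Sum>p\<in>P. int (x j p) + int (y j p))"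
      by (simp add: ca cb sum.distrib)
    also have "\<dots> = (\<Sum>p\<in>P. int (nat (2 * int k * \<bar>l p\<bar>)))"
      using jk by (intro sum.cong) (auto simp: xi yi)
    also have "\<dots> = int (\<Sum>p\<in>P. nat (2 * int k * \<bar>l p\<bar>))" by simp
    finally show ?thesis by linarith
  qed
  show ?thesis using val cnt by blast
qed

end
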